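(* For every real $x$, \[ \frac{1}{\log(1+e^{-x})}<\psi^{-1}(x)<e^{x}+\frac{1}{2}. \] Equivalently, for every $x>0$, $\psi\!\left(\frac{1}{\log(1+1/x)}\right)<\log x<\psi\!\left(x+\frac12\right)$.
   Context: $\psi=\Gamma'/\Gamma$ is the digamma function, which is a strictly increasing bijection from $(0,\infty)$ onto $\mathbb{R}$; $\psi^{-1}:\mathbb{R}\to(0,\infty)$ denotes the inverse of this restriction. *)

theory Defs
  imports "HOL-Analysis.Analysis"
begin

definition inv_digamma :: "real \<Rightarrow> real" where
  "inv_digamma x = (THE y. y > 0 \<and> Digamma y = x)"

end

theory Submission
  imports Defs
begin

lemma ln_ineq1:
  fixes t :: real assumes "t > 0"
  shows "ln (1 + t) > 2 * t / (2 + t)"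
proof -
  have "(\<lambda>x. ln (1 + x) - 2 * x / (2 + x)) 0 < (\<lambda>x. ln (1 + x) - 2 * x / (2 + x)) t"
  proof (rule DERIV_pos_imp_increasing_open[OF assms])
    fix x :: real assume x: "0 < x" "x < t"
    have "DERIV (\<lambda>x. ln (1 + x) - 2 * x / (2 + x)) x :> (1/(1+x) - 4/(2+x)^2)"
      using x by (auto intro!: derivative_eq_intros simp: field_simps power2_eq_square)
    moreover have "1/(1+x) - 4/(2+x)^2 > 0"
    proof -
      have "(2+x)^2 > 4*(1+x)" using x by (simp add: power2_eq_square algebra_simps)
      then have "4/(2+x)^2 < 1/(1+x)" using x by (simp add: divide_simps)
      then show ?thesis by simp
    qed
    ultimately show "\<exists>y. DERIV (\<lambda>x. ln (1 + x) - 2 * x / (2 + x)) x :> y \<and> y > 0" by blast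
  next
    show "continuous_on {0..t} (\<lambda>x. ln (1 + x) - 2 * x / (2 + x))"
      by (intro continuous_intros) auto
  qed
  then show ?thesis by simp
qed

lemma aux_sq: fixes d :: real assumes "d \<noteq> 0"
  shows "1 + (d - (d - 1))/d^2 - 2 * (1/d) = (d-1)^2/d^2"
  using assms by (simp add: field_simps power2_eq_square)

lemma k_pos:
  fixes a :: real assumes "a > 0"
  shows "a + a/(1+a) - 2 * ln (1+a) > 0"
proof -
  have "(\<lambda>x. x + x/(1+x) - 2 * ln (1+x)) 0 < (\<lambda>x. x + x/(1+x) - 2 * ln (1+x)) a"
  proof (rule DERIV_pos_imp_increasing_open[OF assms])
    fix x :: real assume x: "0 < x" "x < a"
    have "DERIV (\<lambda>x. x + x/(1+x) - 2 * ln (1+x)) x :> (1 + ((1+x) - x)/(1+x)^2 - 2 * (1/(1+x)))"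
      using x by (auto intro!: derivative_eq_intros simp: power2_eq_square)
    moreover have "1 + ((1+x) - x)/(1+x)^2 - 2 * (1/(1+x)) = x^2/(1+x)^2"
    proof -
      have h: "(1+x) \<noteq> 0" using x by simp
      show ?thesis using aux_sq[OF h] by simp
    qed
    ultimately have "DERIV (\<lambda>x. x + x/(1+x) - 2 * ln (1+x)) x :> (x^2/(1+x)^2)" by simp
    moreover have "x^2/(1+x)^2 > 0" using x by simp
    ultimately show "\<exists>y. DERIV (\<lambda>x. x + x/(1+x) - 2 * ln (1+x)) x :> y \<and> y > 0" by blast
  next
    show "continuous_on {0..a} (\<lambda>x. x + x/(1+x) - 2 * ln (1+x))"
      by (intro continuous_intros) auto
  qed
  then show ?thesis by simp
qed

lemma phi_pos:
  fixes a :: real assumes "a > 0"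
  shows "exp (a/(1+a)) + exp (-a) > 2"
proof -
  have "(\<lambda>x. exp (x/(1+x)) + exp (-x)) 0 < (\<lambda>x. exp (x/(1+x)) + exp (-x)) a"
  proof (rule DERIV_pos_imp_increasing_open[OF assms])
    fix x :: real assume x: "0 < x" "x < a"
    have "DERIV (\<lambda>x. exp (x/(1+x)) + exp (-x)) x :> (exp (x/(1+x)) / (1+x)^2 - exp (-x))"
      using x by (auto intro!: derivative_eq_intros simp: field_simps power2_eq_square)
    moreover have "exp (x/(1+x)) / (1+x)^2 - exp (-x) > 0"
    proof -
      have "x + x/(1+x) > ln ((1+x)^2)" using k_pos[OF x(1)] x by (simp add: ln_realpow)
      hence "exp (x + x/(1+x)) > (1+x)^2"
        by (metis exp_less_cancel_iff exp_ln x(1) add_pos_pos zero_less_one zero_less_power)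
      hence "exp x * exp (x/(1+x)) > (1+x)^2" by (simp add: exp_add)
      hence "exp (x/(1+x)) > (1+x)^2 * exp (-x)"
        by (simp add: exp_minus field_simps)
      then show ?thesis using x by (simp add: field_simps)
    qed
    ultimately show "\<exists>y. DERIV (\<lambda>x. exp (x/(1+x)) + exp (-x)) x :> y \<and> y > 0" by blast
  next
    show "continuous_on {0..a} (\<lambda>x. exp (x/(1+x)) + exp (-x))"
      by (intro continuous_intros) auto
  qed
  then show ?thesis by simp
qed

lemma ln_step_le: fixes y :: real assumes "y > 0" shows "ln (y+1) - ln y \<le> 1/y"
proof -
  have e: "1 + 1/y = (y+1)/y" using assms by (simp add: field_simps)
  have "ln (y+1) - ln y = ln (1 + 1/y)" unfolding e using assms by (simp add: ln_div)
  also have "\<dots> \<le> 1/y" using assms by (intro ln_add_one_self_le_self) simp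
  finally show ?thesis .
qed

lemma ln_step_ge: fixes y :: real assumes "y > 0" shows "1/(y+1) \<le> ln (y+1) - ln y"
proof -
  have e: "1 + (-1/(y+1)) = y/(y+1)" using assms by (simp add: field_simps)
  have "ln y - ln (y+1) = ln (1 + (-1/(y+1)))" unfolding e using assms by (simp add: ln_div)
  also have "\<dots> \<le> -1/(y+1)" using assms by (intro ln_le_minus_one[THEN order_trans]) (auto simp: field_simps)
  finally show ?thesis by simp
qed

lemma sum_inv_ge: fixes z :: real assumes "z > 0"
  shows "(\<Sum>n<m. inverse (z + real n)) \<ge> ln (z + real m) - ln z"
proof (induction m)
  case 0 then show ?case by simp
next
  case (Suc m)
  have "ln (z + real m + 1) - ln (z + real m) \<le> 1/(z + real m)"
    using assms by (intro ln_step_le) simp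
  moreover have "ln (z + real (Suc m)) = ln (z + real m + 1)" by (simp add: add_ac)
  moreover have "(\<Sum>n<Suc m. inverse (z + real n)) = (\<Sum>n<m. inverse (z + real n)) + 1/(z + real m)"
    by (simp add: inverse_eq_divide)
  ultimately show ?case using Suc by linarith
qed

lemma sum_inv_le: fixes z :: real assumes "z > 0"
  shows "(\<Sum>n<Suc m. inverse (z + real n)) \<le> 1/z + ln (z + real m) - ln z"
proof (induction m)
  case 0 then show ?case by (simp add: inverse_eq_divide)
next
  case (Suc m)
  have "1/(z + real m + 1) \<le> ln (z + real m + 1) - ln (z + real m)"
    using assms by (intro ln_step_ge) simp
  moreover have "ln (z + real (Suc m)) = ln (z + real m + 1)" by (simp add: add_ac)
  moreover have "(\<Sum>n<Suc (Suc m). inverse (z + real n)) = (\<Sum>n<Suc m. inverse (z + real n)) + 1/(z + real m + 1)"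
    by (simp add: inverse_eq_divide add_ac)
  ultimately show ?case using Suc by linarith
qed

lemma lim_ln_diff: fixes z :: real assumes "z > 0"
  shows "(\<lambda>m. ln (real m) - ln (z + real m)) \<longlonglongrightarrow> 0"
proof -
  have "(\<lambda>m. - ln (1 + z / real m)) \<longlonglongrightarrow> - ln (1 + 0)"
    by (intro tendsto_intros lim_const_over_n) auto
  moreover have "eventually (\<lambda>m. - ln (1 + z / real m) = ln (real m) - ln (z + real m)) sequentially"
    using eventually_gt_at_top[of "0::nat"]
  proof eventually_elim
    case (elim m)
    then have "1 + z / real m = (z + real m) / real m" by (simp add: field_simps)
    then show ?case using elim assms by (simp add: ln_div)
  qed
  ultimately show ?thesis by (simp add: Lim_transform_eventually)
qed

lemma Digamma_le_ln: fixes z :: real assumes "z > 0" shows "Digamma z \<le> ln z"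
proof -
  have L: "(\<lambda>m. ln (real m) - (\<Sum>n<m. inverse (z + real n))) \<longlonglongrightarrow> Digamma z"
    using Digamma_LIMSEQ[of z] assms by simp
  have R: "(\<lambda>m. ln (real m) - ln (z + real m) + ln z) \<longlonglongrightarrow> 0 + ln z"
    by (intro tendsto_intros lim_ln_diff assms)
  show ?thesis
    by (rule LIMSEQ_le[OF L R[simplified]]) (use sum_inv_ge[OF assms] in \<open>auto simp: algebra_simps\<close>)
qed

lemma Digamma_ge_ln: fixes z :: real assumes "z > 0" shows "ln z - 1/z \<le> Digamma z"
proof -
  have L: "(\<lambda>m. ln (real (Suc m)) - (\<Sum>n<Suc m. inverse (z + real n))) \<longlonglongrightarrow> Digamma z"
    using LIMSEQ_Suc[OF Digamma_LIMSEQ[of z]] assms by simp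
  have R: "(\<lambda>m. ln (real m) - ln (z + real m) + ln z - 1/z) \<longlonglongrightarrow> 0 + ln z - 1/z"
    by (intro tendsto_intros lim_ln_diff assms)
  have "\<exists>N. \<forall>m\<ge>N. ln (real m) - ln (z + real m) + ln z - 1/z \<le> ln (real (Suc m)) - (\<Sum>n<Suc m. inverse (z + real n))"
  proof (intro exI allI impI)
    fix m :: nat assume "1 \<le> m"
    then have "ln (real m) \<le> ln (real (Suc m))" by simp
    with sum_inv_le[OF assms, of m] show "ln (real m) - ln (z + real m) + ln z - 1/z \<le> ln (real (Suc m)) - (\<Sum>n<Suc m. inverse (z + real n))"
      by linarith
  qed
  then show ?thesis by (rule LIMSEQ_le[OF R[simplified] L])
qed

lemma tele_pos:
  fixes g :: "real \<Rightarrow> real"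
  assumes dec: "\<And>y. y > 0 \<Longrightarrow> g (y + 1) < g y" and x: "x > 0"
    and lim: "(\<lambda>n. g (x + real n)) \<longlonglongrightarrow> 0"
  shows "g x > 0"
proof -
  have "decseq (\<lambda>n. g (x + real n))"
  proof (rule decseq_SucI)
    fix n
    have "g ((x + real n) + 1) < g (x + real n)" using x by (intro dec) simp
    then show "g (x + real (Suc n)) \<le> g (x + real n)" by (simp add: add_ac)
  qed
  from decseq_ge[OF this lim, of 1] have "0 \<le> g (x + 1)" by simp
  with dec[OF x] show ?thesis by simp
qed

lemma inv_seq_0: "(\<lambda>n. inverse (s + real n)) \<longlonglongrightarrow> (0::real)"
  by (intro tendsto_inverse_0_at_top filterlim_tendsto_add_at_top[OF tendsto_const filterlim_real_sequentially])

lemma upper_aux: fixes s :: real assumes "s > 0" shows "Digamma (s + 1/2) > ln s"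
proof -
  define g where "g s = Digamma (s + 1/2) - ln s" for s :: real
  have "g s > 0"
  proof (rule tele_pos[OF _ assms])
    fix y :: real assume y: "y > 0"
    have d: "Digamma (y + 1 + 1/2) = Digamma (y + 1/2) + 1/(y + 1/2)"
      using Digamma_plus1[of "y + 1/2"] y by (simp add: add_ac)
    have e: "1 + 1/y = (y+1)/y" using y by (simp add: field_simps)
    have "ln (1 + 1/y) > 2 * (1/y) / (2 + 1/y)" using ln_ineq1[of "1/y"] y by simp
    moreover have "2 * (1/y) / (2 + 1/y) = 1/(y + 1/2)" using y by (simp add: field_simps)
    moreover have "ln (1 + 1/y) = ln (y+1) - ln y" unfolding e using y by (simp add: ln_div)
    ultimately show "g (y + 1) < g y" unfolding g_def d by simp
  next
    show "(\<lambda>n. g (s + real n)) \<longlonglongrightarrow> 0"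
    proof (rule tendsto_sandwich)
      have A: "(\<lambda>n. ln (1 + (1/2) * inverse (s + real n))) \<longlonglongrightarrow> ln (1 + (1/2) * 0)"
        by (intro tendsto_intros inv_seq_0) auto
      have B: "(\<lambda>n. inverse (s + 1/2 + real n)) \<longlonglongrightarrow> 0" by (rule inv_seq_0)
      have eqv: "ln (1 + (1/2) * inverse (s + real n)) = ln (s + real n + 1/2) - ln (s + real n)" for n
      proof -
        have "1 + (1/2) * inverse (s + real n) = (s + real n + 1/2) / (s + real n)"
          using assms by (simp add: field_simps)
        then show ?thesis using assms by (simp add: ln_div)
      qed
      show "eventually (\<lambda>n. ln (1 + (1/2) * inverse (s + real n)) - inverse (s + 1/2 + real n) \<le> g (s + real n)) sequentially"
      proof (intro always_eventually allI)
        fix n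
        have "ln (s + real n + 1/2) - 1 / (s + real n + 1/2) \<le> Digamma (s + real n + 1/2)" using assms by (intro Digamma_ge_ln) simp
        then show "ln (1 + (1/2) * inverse (s + real n)) - inverse (s + 1/2 + real n) \<le> g (s + real n)"
          unfolding eqv g_def by (simp add: inverse_eq_divide add_ac)
      qed
      show "eventually (\<lambda>n. g (s + real n) \<le> ln (1 + (1/2) * inverse (s + real n))) sequentially"
      proof (intro always_eventually allI)
        fix n
        have "Digamma (s + real n + 1/2) \<le> ln (s + real n + 1/2)" using assms by (intro Digamma_le_ln) simp
        then show "g (s + real n) \<le> ln (1 + (1/2) * inverse (s + real n))" unfolding eqv g_def by simp
      qed
      show "(\<lambda>n. ln (1 + (1/2) * inverse (s + real n)) - inverse (s + 1/2 + real n)) \<longlonglongrightarrow> 0"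
        using tendsto_diff[OF A B] by simp
      show "(\<lambda>n. ln (1 + (1/2) * inverse (s + real n))) \<longlonglongrightarrow> 0" using A by simp
    qed
  qed
  then show ?thesis unfolding g_def by simp
qed

lemma lower_aux: fixes u :: real assumes "u > 0" shows "Digamma u < - ln (exp (1/u) - 1)"
proof -
  define h where "h u = - ln (exp (1/u) - 1) - Digamma u" for u :: real
  have "h u > 0"
  proof (rule tele_pos[OF _ assms])
    fix y :: real assume y: "y > 0"
    define a where "a = 1/y"
    have a: "a > 0" using y by (simp add: a_def)
    have b: "1/(y+1) = a/(1+a)" using y by (simp add: a_def field_simps)
    have d: "Digamma (y + 1) = Digamma y + a"
      using Digamma_plus1[of y] y by (simp add: a_def)
    have p: "exp (a/(1+a)) + exp (-a) > 2" by (rule phi_pos[OF a])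
    have ea: "exp a > 1" using a by simp
    have eb: "exp (a/(1+a)) > 1" using a by simp
    have "exp a * (exp (a/(1+a)) + exp (-a)) > exp a * 2" using p by simp
    hence "exp a * exp (a/(1+a)) + 1 > 2 * exp a" by (simp add: algebra_simps exp_minus)
    hence key: "(exp (a/(1+a)) - 1) * exp a > exp a - 1" by (simp add: algebra_simps)
    have "ln ((exp (a/(1+a)) - 1) * exp a) > ln (exp a - 1)"
      using key ea by (intro ln_less_cancel_iff[THEN iffD2]) auto
    hence "ln (exp (a/(1+a)) - 1) + a > ln (exp a - 1)" using eb a by (simp add: ln_mult)
    then show "h (y + 1) < h y" unfolding h_def d b by (simp add: a_def)
  next
    define v where "v n = inverse (u + real n)" for n :: nat
    have vpos: "v n > 0" for n using assms by (simp add: v_def)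
    have v0: "v \<longlonglongrightarrow> 0" unfolding v_def by (rule inv_seq_0)
    have vat: "filterlim v (at 0) sequentially"
      using v0 vpos by (auto simp: filterlim_at intro!: always_eventually) (metis less_irrefl)
    have Q: "(\<lambda>n. (exp (v n) - 1) / v n) \<longlonglongrightarrow> 1"
      by (rule filterlim_compose[OF lim_exp_minus_1 vat])
    have Ql: "(\<lambda>n. - ln ((exp (v n) - 1) / v n)) \<longlonglongrightarrow> - ln 1"
      by (intro tendsto_intros Q) auto
    have eqv: "- ln ((exp (v n) - 1) / v n) = - ln (exp (1 / (u + real n)) - 1) - ln (u + real n)" for n
    proof -
      have "exp (v n) - 1 > 0" using vpos[of n] by simp
      then have "ln ((exp (v n) - 1) / v n) = ln (exp (v n) - 1) - ln (v n)" using vpos[of n] by (simp add: ln_div)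
      moreover have "ln (v n) = - ln (u + real n)" unfolding v_def using assms by (simp add: ln_inverse)
      ultimately show ?thesis by (simp add: v_def inverse_eq_divide)
    qed
    show "(\<lambda>n. h (u + real n)) \<longlonglongrightarrow> 0"
    proof (rule tendsto_sandwich)
      show "eventually (\<lambda>n. - ln ((exp (v n) - 1) / v n) \<le> h (u + real n)) sequentially"
      proof (intro always_eventually allI)
        fix n
        have "Digamma (u + real n) \<le> ln (u + real n)" using assms by (intro Digamma_le_ln) simp
        then show "- ln ((exp (v n) - 1) / v n) \<le> h (u + real n)" unfolding eqv h_def by simp
      qed
      show "eventually (\<lambda>n. h (u + real n) \<le> - ln ((exp (v n) - 1) / v n) + v n) sequentially"
      proof (intro always_eventually allI)
        fix n
        have "ln (u + real n) - 1 / (u + real n) \<le> Digamma (u + real n)" using assms by (intro Digamma_ge_ln) simp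
        then show "h (u + real n) \<le> - ln ((exp (v n) - 1) / v n) + v n"
          unfolding eqv h_def by (simp add: v_def inverse_eq_divide)
      qed
      show "(\<lambda>n. - ln ((exp (v n) - 1) / v n)) \<longlonglongrightarrow> 0" using Ql by simp
      show "(\<lambda>n. - ln ((exp (v n) - 1) / v n) + v n) \<longlonglongrightarrow> 0" using tendsto_add[OF Ql v0] by simp
    qed
  qed
  then show ?thesis unfolding h_def by simp
qed


lemma inv_digamma_prop: "inv_digamma x > 0 \<and> Digamma (inv_digamma x) = x"
proof -
  define a where "a = exp x"
  define b where "b = exp (\<bar>x\<bar> + 1)"
  have a: "a > 0" and b: "b \<ge> 1" and ab: "a \<le> b" by (auto simp: a_def b_def)
  have fa: "Digamma a \<le> x" using Digamma_le_ln[OF a] by (simp add: a_def)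
  have "ln b - 1/b \<le> Digamma b" using b by (intro Digamma_ge_ln) simp
  moreover have "1/b \<le> 1" using b by simp
  moreover have "ln b = \<bar>x\<bar> + 1" by (simp add: b_def)
  ultimately have fb: "x \<le> Digamma b" by linarith
  have cont: "continuous_on {a..b} (Digamma :: real \<Rightarrow> real)"
    using a by (intro continuous_on_Polygamma) (auto elim!: nonpos_Ints_cases)
  obtain y where y: "a \<le> y" "y \<le> b" "Digamma y = x" using IVT'[OF fa fb ab cont] by blast
  have ex: "\<exists>!y. y > 0 \<and> Digamma y = x"
  proof (rule ex1I[of _ y])
    show "y > 0 \<and> Digamma y = x" using y a by simp
  next
    fix z assume z: "z > 0 \<and> Digamma z = x"
    show "z = y"
    proof (rule ccontr)
      assume "z \<noteq> y"
      then consider "z < y" | "y < z" by linarith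
      then show False
        using Digamma_real_strict_mono[of z y] Digamma_real_strict_mono[of y z] z y a by cases auto
    qed
  qed
  show ?thesis unfolding inv_digamma_def using theI'[OF ex] .
qed

theorem theorem2p2:
  fixes x :: real
  shows "1 / ln (1 + exp (- x)) < inv_digamma x \<and> inv_digamma x < exp x + 1 / 2"
proof -
  define y where "y = inv_digamma x"
  have y: "y > 0" "Digamma y = x" using inv_digamma_prop[of x] by (auto simp: y_def)
  have up: "y < exp x + 1/2"
  proof (rule ccontr)
    assume "\<not> ?thesis"
    hence "Digamma (exp x + 1/2) \<le> Digamma y"
      by (intro Digamma_real_mono) (auto simp: add_pos_pos)
    moreover have "Digamma (exp x + 1/2) > ln (exp x)" by (rule upper_aux) simp
    ultimately show False using y by simp
  qed
  define u where "u = 1 / ln (1 + exp (- x))"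
  have lpos: "ln (1 + exp (- x)) > 0" by (intro ln_gt_zero) (simp add: add_pos_pos)
  have u: "u > 0" using lpos by (simp add: u_def)
  have "1/u = ln (1 + exp (- x))" by (simp add: u_def)
  hence "exp (1/u) - 1 = exp (- x)" by (simp add: add_pos_pos)
  hence "- ln (exp (1/u) - 1) = x" by simp
  hence du: "Digamma u < x" using lower_aux[OF u] by simp
  have lo: "u < y"
  proof (rule ccontr)
    assume "\<not> ?thesis"
    hence "Digamma y \<le> Digamma u" using y by (intro Digamma_real_mono) auto
    with du y show False by simp
  qed
  show ?thesis using up lo by (simp add: y_def u_def)
qed

end
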